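(* Assume the setting of the context and let $\varepsilon>0$. Define \[ \Gamma_\pm=1-2^{1\mp\varepsilon/2}\Big(\tfrac23\Big)^{d/2}+2^{-d/2\mp\varepsilon},\qquad \Delta_\pm=\Big(\tfrac23\Big)^{d/2}+3\cdot2^{d/2\mp\varepsilon/2}5^{-d/2}+3\cdot2^{\mp\varepsilon-d}+2^{\mp3\varepsilon/2-d/2}3^{-d/2}. \] Assume $\Gamma_+>0$ and let $c\in(0,1)$ be such that \[ \eta:=c\,\frac{2^{\varepsilon/2}-1}{1+2^{\varepsilon/2}}<\frac{\Gamma_+}{1+2^{1-\varepsilon/2}(2/3)^{d/2}+2^{-d/2-\varepsilon}}, \] and set $\eta^*_\pm=\eta\,\frac{1+2^{1\mp\varepsilon/2}(2/3)^{d/2}+2^{-d/2\mp\varepsilon}}{\Gamma_\pm}$. Suppose $t>0$ is such that for every $\hat t\in\{t/3,\,2t/5,\,t/2,\,2t/3,\,t,\,2t\}$, $(1-\eta)p(x)\pi^{d/2}\hat t^{d/2}\le\mathbb{E}[K_{\hat t}(x,X)]\le(1+\eta)p(x)\pi^{d/2}\hat t^{d/2}$. Then \[ \mathbb{E}[Y_+]\le(2^{\varepsilon/2}-1)(1+c)P_t,\qquad \mathbb{E}[-Y_-]\le(1-2^{-\varepsilon/2})(1+c)P_t, \] \[ \mathrm{Var}(Y_\pm)\ge2^{\pm\varepsilon}\Gamma_\pm(1-\eta^*_\pm)P_t+\mathcal O(P_t^2),\qquad \mathbb{E}\big[|Y_\pm-\mathbb{E}[Y_\pm]|^3\big]\le(1+\eta)\Delta_\pm2^{d/2\pm3\varepsilon/2}P_t+\mathcal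 O(P_t^2), \] where $\mathcal O(P_t^2)$ denotes a quantity bounded in absolute value by a constant depending only on $d,\varepsilon,c$ times $P_t^2$.
   Context: Setting: $\Omega\subset\mathbb{R}^N$ is a smooth $d$-dimensional submanifold ($d\ge1$ an integer). $X$ is a random point of $\Omega$ with probability density $p$ with respect to the volume measure of $\Omega$. A point $x\in\Omega$ with $p(x)>0$ is fixed. $K_t(x,y)=\exp(-\|x-y\|^2/t)$ for $t>0$. $P_t=2^{d/2}p(x)\pi^{d/2}t^{d/2}$. Random variables $Y_+=2^{(d+\varepsilon)/2}K_t(x,X)-K_{2t}(x,X)$ and $Y_-=2^{(d-\varepsilon)/2}K_t(x,X)-K_{2t}(x,X)$. *)

theory Defs
  imports "HOL-Analysis.Analysis" "HOL-Probability.Probability"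
begin

text \<open>Points of the ambient space R^N are represented as functions nat => real;
  only the coordinates 0..N-1 enter the squared Euclidean distance.\<close>

definition sqdist :: "nat \<Rightarrow> (nat \<Rightarrow> real) \<Rightarrow> (nat \<Rightarrow> real) \<Rightarrow> real" where
  "sqdist N x y = (\<Sum>i<N. (x i - y i)^2)"

definition kern :: "nat \<Rightarrow> real \<Rightarrow> (nat \<Rightarrow> real) \<Rightarrow> (nat \<Rightarrow> real) \<Rightarrow> real" where
  "kern N t x y = exp (- sqdist N x y / t)"

definition Pt :: "nat \<Rightarrow> real \<Rightarrow> real \<Rightarrow> real" where
  "Pt d px t = 2 powr (real d / 2) * px * pi powr (real d / 2) * t powr (real d / 2)"

text \<open>With e = +eps (resp. -eps): Gam d e = Gamma_+ (resp. Gamma_-), Del d e = Delta_+ (resp. Delta_-),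
  Nm d e = 1 + 2^(1 - e/2)(2/3)^(d/2) + 2^(-d/2 - e).\<close>
definition Gam :: "nat \<Rightarrow> real \<Rightarrow> real" where
  "Gam d e = 1 - 2 powr (1 - e/2) * (2/3) powr (real d / 2) + 2 powr (- real d / 2 - e)"

definition Del :: "nat \<Rightarrow> real \<Rightarrow> real" where
  "Del d e = (2/3) powr (real d / 2) + 3 * 2 powr (real d / 2 - e/2) * 5 powr (- real d / 2)
     + 3 * 2 powr (- e - real d) + 2 powr (- 3 * e / 2 - real d / 2) * 3 powr (- real d / 2)"

definition Nm :: "nat \<Rightarrow> real \<Rightarrow> real" where
  "Nm d e = 1 + 2 powr (1 - e/2) * (2/3) powr (real d / 2) + 2 powr (- real d / 2 - e)"

definition Yv :: "nat \<Rightarrow> nat \<Rightarrow> real \<Rightarrow> real \<Rightarrow> (nat \<Rightarrow> real) \<Rightarrow> (nat \<Rightarrow> real) \<Rightarrow> real" where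
  "Yv N d e t x y = 2 powr ((real d + e) / 2) * kern N t x y - kern N (2*t) x y"

end

theory Submission
  imports Defs
begin

lemma kern_meas: "(\<lambda>y. kern N th x y) \<in> borel_measurable borel"
  unfolding kern_def sqdist_def by measurable

lemma kern_pos: "0 < kern N th x y" unfolding kern_def by simp

lemma sqdist_nonneg: "0 \<le> sqdist N x y" unfolding sqdist_def by (simp add: sum_nonneg)

lemma kern_le1: "th > 0 \<Longrightarrow> kern N th x y \<le> 1"
  unfolding kern_def using sqdist_nonneg[of N x y] by simp

lemma kern_mult: "a > 0 \<Longrightarrow> b > 0 \<Longrightarrow> kern N a x y * kern N b x y = kern N (a*b/(a+b)) x y"
  unfolding kern_def by (simp add: exp_add[symmetric] field_simps)

lemma powr_facts:
  fixes e :: real and d :: nat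
  defines "g \<equiv> 2 powr (e/2)" and "h \<equiv> 2 powr (real d/2)"
    and "r3 \<equiv> 3 powr (real d/2)" and "r5 \<equiv> 5 powr (real d/2)"
  shows "Gam d e = 1 - (2/g)*(h/r3) + 1/(h*g^2)"
    "Nm d e = 1 + (2/g)*(h/r3) + 1/(h*g^2)"
    "Del d e = h/r3 + 3*h/(g*r5) + 3/(g^2*h^2) + 1/(g^3*h*r3)"
    "2 powr (real d / 2 + 3*e/2) = h*g^3" "2 powr e = g^2"
    "2 powr ((real d+e)/2) = h * g"
proof -
  have a1: "2 powr (1 - e/2) = 2/g" "(2/3) powr (real d/2) = h/r3"
    "2 powr (- real d/2 - e) = 1/(h*g^2)" "2 powr (real d/2 - e/2) = h/g"
    "5 powr (- real d/2) = 1/r5" "2 powr (- e - real d) = 1/(g^2*h^2)"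
    "2 powr (- 3 * e / 2 - real d / 2) = 1/(g^3*h)" "3 powr (- real d/2) = 1/r3"
    unfolding g_def h_def r3_def r5_def
    by (simp_all add: power2_eq_square powr_add[symmetric] powr_minus powr_diff divide_simps power3_eq_cube powr_divide)
  show "Gam d e = 1 - (2/g)*(h/r3) + 1/(h*g^2)"
    "Nm d e = 1 + (2/g)*(h/r3) + 1/(h*g^2)"
    unfolding Gam_def Nm_def a1 by simp_all
  show "Del d e = h/r3 + 3*h/(g*r5) + 3/(g^2*h^2) + 1/(g^3*h*r3)"
    unfolding Del_def a1 by (simp add: field_simps)
  show "2 powr (real d / 2 + 3*e/2) = h*g^3" "2 powr e = g^2"
    "2 powr ((real d+e)/2) = h * g"
    unfolding g_def h_def
    by (simp_all add: power2_eq_square powr_add[symmetric] powr_minus powr_diff divide_simps power3_eq_cube)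
qed
lemma core:
  fixes N d :: nat and \<mu> :: "(nat\<Rightarrow>real) measure" and x :: "nat \<Rightarrow> real" and px t \<eta> e :: real
  assumes ps: "prob_space \<mu>" and sb: "sets \<mu> = sets borel" and px: "px > 0" and t: "t > 0"
    and \<eta>0: "0 \<le> \<eta>" and \<eta>1: "\<eta> < 1"
    and hyp: "\<forall>th \<in> {t/3, 2*t/5, t/2, 2*t/3, t, 2*t}.
          (1 - \<eta>) * px * pi powr (real d / 2) * th powr (real d / 2) \<le> integral\<^sup>L \<mu> (\<lambda>y. kern N th x y) \<and>
          integral\<^sup>L \<mu> (\<lambda>y. kern N th x y) \<le> (1 + \<eta>) * px * pi powr (real d / 2) * th powr (real d / 2)"
  defines "P \<equiv> Pt d px t" and "m \<equiv> integral\<^sup>L \<mu> (\<lambda>y. Yv N d e t x y)"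
    and "M1 \<equiv> (1+\<eta>)*(2 powr (e/2)+1)" and "M2 \<equiv> (1+\<eta>)*(2 powr (e/2))^2 * Nm d e"
    and "B0 \<equiv> 2 powr (real d/2)/(1-\<eta>)"
  shows "m \<le> P*(2 powr (e/2)*(1+\<eta>) - (1-\<eta>))"
    "-m \<le> P*((1+\<eta>) - 2 powr (e/2)*(1-\<eta>))"
    "integral\<^sup>L \<mu> (\<lambda>y. (Yv N d e t x y - m)^2) \<ge> 2 powr e * (Gam d e - \<eta> * Nm d e) * P - M1^2 * P^2"
    "integral\<^sup>L \<mu> (\<lambda>y. \<bar>Yv N d e t x y - m\<bar>^3) \<le> (1 + \<eta>) * Del d e * 2 powr (real d / 2 + 3 * e / 2) * P + (3*M1*M2 + 4*M1^3*B0) * P^2"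
proof -
  interpret prob_space \<mu> by (rule ps)
  define k where "k th = (\<lambda>y. kern N th x y)" for th
  define E where "E th = integral\<^sup>L \<mu> (k th)" for th
  have meas: "k th \<in> borel_measurable \<mu>" for th
    unfolding k_def using kern_meas measurable_cong_sets[OF sb refl] by blast
  have int: "integrable \<mu> (k th)" if "th > 0" for th
    by (rule integrable_const_bound[where B=1]) (use that meas kern_pos kern_le1 in \<open>auto simp: k_def less_imp_le\<close>)
  have Enn: "E th \<ge> 0" for th unfolding E_def k_def by (simp add: kern_pos less_imp_le)
  have Et1: "E t \<le> 1"
  proof -
    have "E t \<le> integral\<^sup>L \<mu> (\<lambda>_. 1::real)" unfolding E_def
      by (rule integral_mono) (use int t kern_le1 in \<open>auto simp: k_def\<close>)
    thus ?thesis using prob_space by simp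
  qed
  define g where "g = 2 powr (e/2)"
  define h where "h = 2 powr (real d/2)"
  define r3 where "r3 = 3 powr (real d/2)"
  define r5 where "r5 = 5 powr (real d/2)"
  define T where "T = t powr (real d/2)"
  define a where "a = px * pi powr (real d / 2)"
  have pos: "g > 0" "h > 0" "r3 > 0" "r5 > 0" "T > 0" "a > 0"
    unfolding g_def h_def r3_def r5_def T_def a_def using t px by auto
  have PhaT: "P = h * a * T" unfolding P_def Pt_def h_def a_def T_def by (simp add: mult_ac)
  define s where "s = h * g"
  have spos: "s > 0" using pos s_def by simp
  have Yeq: "Yv N d e t x y = s * k t y - k (2*t) y" for y
    unfolding Yv_def k_def s_def h_def g_def powr_facts(6) ..
  have tp: "(t/3) powr (real d/2) = T/r3" "(2*t/5) powr (real d/2) = h*T/r5" "(t/2) powr (real d/2) = T/h"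
     "(2*t/3) powr (real d/2) = h*T/r3" "(2*t) powr (real d/2) = h*T"
    unfolding T_def h_def r3_def r5_def using t by (simp_all add: powr_divide powr_mult)
  have hb: "(1-\<eta>)*a*th powr (real d/2) \<le> E th \<and> E th \<le> (1+\<eta>)*a*th powr (real d/2)"
    if "th \<in> {t/3, 2*t/5, t/2, 2*t/3, t, 2*t}" for th
  proof -
    have "(1 - \<eta>) * px * pi powr (real d / 2) * th powr (real d / 2) \<le> integral\<^sup>L \<mu> (\<lambda>y. kern N th x y) \<and>
          integral\<^sup>L \<mu> (\<lambda>y. kern N th x y) \<le> (1 + \<eta>) * px * pi powr (real d / 2) * th powr (real d / 2)"
      using hyp that by blast
    thus ?thesis unfolding E_def k_def a_def by (simp add: mult.assoc)
  qed
  have b1: "(1-\<eta>)*a*(T/r3) \<le> E (t/3)" "E (t/3) \<le> (1+\<eta>)*a*(T/r3)"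
    using hb[of "t/3"] tp by auto
  have b2: "(1-\<eta>)*a*(h*T/r5) \<le> E (2*t/5)" "E (2*t/5) \<le> (1+\<eta>)*a*(h*T/r5)"
    using hb[of "2*t/5"] tp by auto
  have b3: "(1-\<eta>)*a*(T/h) \<le> E (t/2)" "E (t/2) \<le> (1+\<eta>)*a*(T/h)"
    using hb[of "t/2"] tp by auto
  have b4: "(1-\<eta>)*a*(h*T/r3) \<le> E (2*t/3)" "E (2*t/3) \<le> (1+\<eta>)*a*(h*T/r3)"
    using hb[of "2*t/3"] tp by auto
  have b5: "(1-\<eta>)*a*T \<le> E t" "E t \<le> (1+\<eta>)*a*T"
    using hb[of "t"] T_def by auto
  have b6: "(1-\<eta>)*a*(h*T) \<le> E (2*t)" "E (2*t) \<le> (1+\<eta>)*a*(h*T)"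
    using hb[of "2*t"] tp by auto
  have meq: "m = s * E t - E (2*t)"
    unfolding m_def Yeq E_def using int t by simp
  show "m \<le> P*(2 powr (e/2)*(1+\<eta>) - (1-\<eta>))"
  proof -
    have "s * E t \<le> s * ((1+\<eta>)*a*T)" using b5 spos by (simp add: mult_left_mono)
    hence "m \<le> s * ((1+\<eta>)*a*T) - (1-\<eta>)*a*(h*T)" using meq b6 by linarith
    also have "\<dots> = P*(2 powr (e/2)*(1+\<eta>) - (1-\<eta>))"
      unfolding PhaT s_def g_def by (simp add: algebra_simps)
    finally show ?thesis .
  qed
  show "-m \<le> P*((1+\<eta>) - 2 powr (e/2)*(1-\<eta>))"
  proof -
    have "s * E t \<ge> s * ((1-\<eta>)*a*T)" using b5 spos by (simp add: mult_left_mono)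
    hence "-m \<le> (1+\<eta>)*a*(h*T) - s * ((1-\<eta>)*a*T)" using meq b6 by linarith
    also have "\<dots> = P*((1+\<eta>) - 2 powr (e/2)*(1-\<eta>))"
      unfolding PhaT s_def g_def by (simp add: algebra_simps)
    finally show ?thesis .
  qed
  have G: "Gam d e = 1 - (2/g)*(h/r3) + 1/(h*g^2)"
    "Nm d e = 1 + (2/g)*(h/r3) + 1/(h*g^2)"
    "Del d e = h/r3 + 3*h/(g*r5) + 3/(g^2*h^2) + 1/(g^3*h*r3)"
    "2 powr (real d / 2 + 3*e/2) = h*g^3" "2 powr e = g^2"
    unfolding g_def h_def r3_def r5_def by (rule powr_facts)+
  have Y2: "(Yv N d e t x y)^2 = s^2 * k (t/2) y - 2* s*k (2*t/3) y + k t y" for y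
  proof -
    have "k t y * k t y = k (t/2) y" "k t y * k (2*t) y = k (2*t/3) y" "k (2*t) y * k (2*t) y = k t y"
      unfolding k_def using t by (simp_all add: kern_mult field_simps)
    thus ?thesis unfolding Yeq by (simp add: power2_eq_square algebra_simps)
  qed
  have intY: "integrable \<mu> (\<lambda>y. Yv N d e t x y)" unfolding Yeq using int t by simp
  have intY2: "integrable \<mu> (\<lambda>y. (Yv N d e t x y)^2)" unfolding Y2 using int t by simp
  have EY2: "integral\<^sup>L \<mu> (\<lambda>y. (Yv N d e t x y)^2) = s^2 * E (t/2) - 2* s*E (2*t/3) + E t"
    unfolding Y2 E_def using int t by simp
  have absm: "\<bar>m\<bar> \<le> M1 * P"
  proof -
    have "\<bar>m\<bar> \<le> s * E t + E (2*t)" using meq Enn spos by (simp add: abs_le_iff)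
    also have "\<dots> \<le> s * ((1+\<eta>)*a*T) + (1+\<eta>)*a*(h*T)"
      using b5 b6 spos by (simp add: add_mono mult_left_mono)
    also have "\<dots> = M1 * P" unfolding M1_def PhaT s_def g_def by (simp add: algebra_simps)
    finally show ?thesis .
  qed
  have m2: "m^2 \<le> M1^2 * P^2"
  proof -
    have "m^2 = \<bar>m\<bar>^2" by simp
    also have "\<dots> \<le> (M1*P)^2" by (rule power_mono[OF absm]) simp
    finally show ?thesis by (simp add: power_mult_distrib)
  qed
  show "integral\<^sup>L \<mu> (\<lambda>y. (Yv N d e t x y - m)^2) \<ge> 2 powr e * (Gam d e - \<eta> * Nm d e) * P - M1^2 * P^2"
  proof -
    have "integral\<^sup>L \<mu> (\<lambda>y. (Yv N d e t x y - m)^2) = s^2 * E (t/2) - 2* s*E (2*t/3) + E t - m^2"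
      unfolding m_def variance_eq[OF intY intY2] EY2 ..
    moreover have "s^2 * E (t/2) \<ge> s^2 * ((1-\<eta>)*a*(T/h))" by (rule mult_left_mono[OF b3(1)]) simp
    moreover have "2* s*E (2*t/3) \<le> 2* s*((1+\<eta>)*a*(h*T/r3))" by (rule mult_left_mono[OF b4(2)]) (use spos in simp)
    moreover have "s^2 * ((1-\<eta>)*a*(T/h)) - 2* s*((1+\<eta>)*a*(h*T/r3)) + (1-\<eta>)*a*T
        = 2 powr e * (Gam d e - \<eta> * Nm d e) * P"
      unfolding PhaT s_def G
      using pos by (simp add: field_simps power2_eq_square)
    ultimately show ?thesis using b5 m2 by linarith
  qed
  define S1 where "S1 = s * E t + E (2*t)"
  define S2 where "S2 = s^2 * E (t/2) + 2 * s * E (2*t/3) + E t"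
  define S3 where "S3 = s^3 * E (t/3) + 3 * s^2 * E (2*t/5) + 3 * s * E (t/2) + E (2*t/3)"
  define Gf where "Gf y = s^3 * k (t/3) y + 3 * s^2 * k (2*t/5) y + 3 * s * k (t/2) y + k (2*t/3) y
     + 3 * \<bar>m\<bar> * (s^2 * k (t/2) y + 2 * s * k (2*t/3) y + k t y)
     + 3 * m^2 * (s * k t y + k (2*t) y) + \<bar>m\<bar>^3" for y
  have intG: "integrable \<mu> Gf" unfolding Gf_def using int t by simp
  have EG: "integral\<^sup>L \<mu> Gf = S3 + 3 * \<bar>m\<bar> * S2 + 3 * m^2 * S1 + \<bar>m\<bar>^3"
    unfolding Gf_def S1_def S2_def S3_def E_def using int t prob_space by simp
  have ptw: "\<bar>Yv N d e t x y - m\<bar>^3 \<le> Gf y" for y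
  proof -
    define A where "A = k t y"
    define B where "B = k (2*t) y"
    have AB: "A > 0" "B > 0" unfolding A_def B_def k_def by (simp_all add: kern_pos)
    have pr: "A * A = k (t/2) y" "k (t/2) y * A = k (t/3) y" "k (t/2) y * B = k (2*t/5) y"
      "A * B = k (2*t/3) y" "k (2*t/3) y * B = k (t/2) y" "B * B = A"
      unfolding A_def B_def k_def using t by (simp_all add: kern_mult field_simps)
    have "\<bar>Yv N d e t x y - m\<bar> \<le> s * A + B + \<bar>m\<bar>"
      unfolding Yeq A_def[symmetric] B_def[symmetric] using AB mult_pos_pos[OF spos AB(1)]
      by (smt (verit))
    hence "\<bar>Yv N d e t x y - m\<bar>^3 \<le> (s * A + B + \<bar>m\<bar>)^3" by (rule power_mono) simp
    also have "\<dots> = s^3 * (A*A*A) + 3 * s^2 * (A*A*B) + 3 * s * (A*B*B) + B*B*B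
       + 3 * \<bar>m\<bar> * (s^2 * (A*A) + 2 * s * (A*B) + B*B) + 3 * \<bar>m\<bar>^2 * (s * A + B) + \<bar>m\<bar>^3"
      by algebra
    also have "\<dots> = Gf y" unfolding Gf_def pr power2_abs unfolding A_def B_def ..
    finally show ?thesis .
  qed
  have intA: "integrable \<mu> (\<lambda>y. \<bar>Yv N d e t x y - m\<bar>^3)"
  proof (rule Bochner_Integration.integrable_bound[OF intG])
    show "(\<lambda>y. \<bar>Yv N d e t x y - m\<bar>^3) \<in> borel_measurable \<mu>" unfolding Yeq using meas by measurable
    show "AE y in \<mu>. norm (\<bar>Yv N d e t x y - m\<bar>^3) \<le> norm (Gf y)"
    proof (intro AE_I2)
      fix y
      have "norm (\<bar>Yv N d e t x y - m\<bar>^3) = \<bar>Yv N d e t x y - m\<bar>^3" by simp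
      also have "\<dots> \<le> Gf y" by (rule ptw)
      also have "\<dots> \<le> norm (Gf y)" by simp
      finally show "norm (\<bar>Yv N d e t x y - m\<bar>^3) \<le> norm (Gf y)" .
    qed
  qed
  have third1: "integral\<^sup>L \<mu> (\<lambda>y. \<bar>Yv N d e t x y - m\<bar>^3) \<le> S3 + 3 * \<bar>m\<bar> * S2 + 3 * m^2 * S1 + \<bar>m\<bar>^3"
    unfolding EG[symmetric] by (rule integral_mono[OF intA intG ptw])
  have S3b: "S3 \<le> (1 + \<eta>) * Del d e * 2 powr (real d / 2 + 3 * e / 2) * P"
  proof -
    have "s^3 * E (t/3) \<le> s^3 * ((1+\<eta>)*a*(T/r3))" by (rule mult_left_mono[OF b1(2)]) (use spos in simp)
    moreover have "3 * s^2 * E (2*t/5) \<le> 3 * s^2 * ((1+\<eta>)*a*(h*T/r5))" by (rule mult_left_mono[OF b2(2)]) simp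
    moreover have "3 * s * E (t/2) \<le> 3 * s * ((1+\<eta>)*a*(T/h))" by (rule mult_left_mono[OF b3(2)]) (use spos in simp)
    moreover have "s^3 * ((1+\<eta>)*a*(T/r3)) + 3 * s^2 * ((1+\<eta>)*a*(h*T/r5)) + 3 * s * ((1+\<eta>)*a*(T/h))
       + (1+\<eta>)*a*(h*T/r3) = (1 + \<eta>) * Del d e * 2 powr (real d / 2 + 3 * e / 2) * P"
      unfolding PhaT s_def G using pos by (simp add: field_simps power2_eq_square power3_eq_cube)
    ultimately show ?thesis unfolding S3_def using b4 by linarith
  qed
  have S2b: "S2 \<le> M2 * P"
  proof -
    have "s^2 * E (t/2) \<le> s^2 * ((1+\<eta>)*a*(T/h))" by (rule mult_left_mono[OF b3(2)]) simp
    moreover have "2 * s * E (2*t/3) \<le> 2 * s * ((1+\<eta>)*a*(h*T/r3))" by (rule mult_left_mono[OF b4(2)]) (use spos in simp)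
    moreover have "s^2 * ((1+\<eta>)*a*(T/h)) + 2 * s * ((1+\<eta>)*a*(h*T/r3)) + (1+\<eta>)*a*T = M2 * P"
      unfolding PhaT s_def M2_def G g_def[symmetric] using pos by (simp add: field_simps power2_eq_square)
    ultimately show ?thesis unfolding S2_def using b5 by linarith
  qed
  have S1b: "S1 \<le> M1 * P"
  proof -
    have "s * E t \<le> s * ((1+\<eta>)*a*T)" by (rule mult_left_mono[OF b5(2)]) (use spos in simp)
    moreover have "s * ((1+\<eta>)*a*T) + (1+\<eta>)*a*(h*T) = M1 * P"
      unfolding PhaT s_def M1_def g_def[symmetric] using pos by (simp add: field_simps)
    ultimately show ?thesis unfolding S1_def using b6 by linarith
  qed
  have Pnn: "P \<ge> 0" unfolding PhaT using pos by simp
  have PB: "P \<le> B0"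
  proof -
    have "(1-\<eta>)*a*T \<le> 1" using b5 Et1 by linarith
    hence "a*T \<le> 1/(1-\<eta>)" using \<eta>1 by (simp add: field_simps)
    hence "h*(a*T) \<le> h*(1/(1-\<eta>))" by (rule mult_left_mono) (use pos in simp)
    thus ?thesis unfolding PhaT B0_def h_def[symmetric] by (simp add: mult.assoc)
  qed
  have M1nn: "M1 \<ge> 0" unfolding M1_def using \<eta>0 by simp
  have Nmpos: "Nm d e > 0"
  proof -
    have "0 \<le> (2/g)*(h/r3)" "0 \<le> 1/(h*g^2)" using pos by simp_all
    thus ?thesis unfolding G by linarith
  qed
  have M2nn: "M2 \<ge> 0" unfolding M2_def using \<eta>0 Nmpos by simp
  have S1nn: "S1 \<ge> 0" unfolding S1_def using Enn spos by simp
  have S2nn: "S2 \<ge> 0" unfolding S2_def using Enn spos by simp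
  have t2: "3 * \<bar>m\<bar> * S2 \<le> 3 * (M1*P) * (M2*P)"
    using mult_mono[OF absm S2b] M1nn Pnn S2nn by simp
  have m2': "m^2 \<le> (M1*P)^2" using m2 by (simp add: power_mult_distrib)
  have t3: "3 * m^2 * S1 \<le> 3 * (M1*P)^2 * (M1*P)"
    using mult_mono[OF m2' S1b] M1nn Pnn S1nn by simp
  have t4: "\<bar>m\<bar>^3 \<le> (M1*P)^3" by (rule power_mono[OF absm]) simp
  have t5: "(M1*P)^3 \<le> M1^3 * B0 * P^2"
  proof -
    have "(M1*P)^3 = (M1^3 * P^2) * P" by (simp add: power3_eq_cube power2_eq_square)
    also have "\<dots> \<le> (M1^3 * P^2) * B0" by (rule mult_left_mono[OF PB]) (use M1nn Pnn in simp)
    finally show ?thesis by (simp add: mult_ac)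
  qed
  have "3 * (M1*P) * (M1*P)^2 = 3 * (M1*P)^3" by (simp add: power2_eq_square power3_eq_cube)
  hence t3': "3 * m^2 * S1 \<le> 3 * (M1^3 * B0 * P^2)" using t3 t5 by (simp add: mult.commute)
  have t2': "3 * (M1*P) * (M2*P) = 3*M1*M2*P^2" by (simp add: power2_eq_square)
  show "integral\<^sup>L \<mu> (\<lambda>y. \<bar>Yv N d e t x y - m\<bar>^3) \<le> (1 + \<eta>) * Del d e * 2 powr (real d / 2 + 3 * e / 2) * P + (3*M1*M2 + 4*M1^3*B0) * P^2"
  proof -
    have a1: "3 * \<bar>m\<bar> * S2 \<le> 3*M1*M2*P^2" using t2 t2' by linarith
    have a2: "\<bar>m\<bar>^3 \<le> M1^3 * B0 * P^2" using t4 t5 by linarith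
    have a3: "(3*M1*M2 + 4*M1^3*B0) * P^2 = 3*M1*M2*P^2 + 4 * (M1^3 * B0 * P^2)" by (simp add: algebra_simps)
    show ?thesis using third1 S3b a1 a2 a3 t3' by linarith
  qed
qed

lemma Nm_pos: "Nm d e > 0"
proof -
  have "0 < 2 powr (1 - e/2) * (2/3) powr (real d / 2)" "0 < 2 powr (- real d / 2 - e)" by simp_all
  thus ?thesis unfolding Nm_def by linarith
qed

theorem mainTheorem5:
  fixes d :: nat and \<epsilon> c :: real
  assumes d1: "d \<ge> 1" and eps: "\<epsilon> > 0"
    and Gp: "Gam d \<epsilon> > 0"
    and c: "0 < c" "c < 1"
    and eta: "c * (2 powr (\<epsilon>/2) - 1) / (1 + 2 powr (\<epsilon>/2)) < Gam d \<epsilon> / Nm d \<epsilon>"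
  shows "\<exists>C::real. \<forall>(N::nat) (\<mu>::(nat \<Rightarrow> real) measure) (x::nat \<Rightarrow> real) (px::real) (t::real).
     let \<eta> = c * (2 powr (\<epsilon>/2) - 1) / (1 + 2 powr (\<epsilon>/2));
         \<eta>s = (\<lambda>e. \<eta> * Nm d e / Gam d e);
         P = Pt d px t;
         EY = (\<lambda>e. integral\<^sup>L \<mu> (\<lambda>y. Yv N d e t x y))
     in
     (prob_space \<mu> \<and> sets \<mu> = sets borel \<and> px > 0 \<and> t > 0 \<and>
      (\<forall>th \<in> {t/3, 2*t/5, t/2, 2*t/3, t, 2*t}.
          (1 - \<eta>) * px * pi powr (real d / 2) * th powr (real d / 2) \<le> integral\<^sup>L \<mu> (\<lambda>y. kern N th x y) \<and>
          integral\<^sup>L \<mu> (\<lambda>y. kern N th x y) \<le> (1 + \<eta>) * px * pi powr (real d / 2) * th powr (real d / 2)))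
     \<longrightarrow>
     (EY \<epsilon> \<le> (2 powr (\<epsilon>/2) - 1) * (1 + c) * P \<and>
      integral\<^sup>L \<mu> (\<lambda>y. - Yv N d (-\<epsilon>) t x y) \<le> (1 - 2 powr (-\<epsilon>/2)) * (1 + c) * P \<and>
      (\<forall>e \<in> {\<epsilon>, -\<epsilon>}.
         integral\<^sup>L \<mu> (\<lambda>y. (Yv N d e t x y - EY e)^2)
           \<ge> 2 powr e * Gam d e * (1 - \<eta>s e) * P - C * P^2 \<and>
         integral\<^sup>L \<mu> (\<lambda>y. \<bar>Yv N d e t x y - EY e\<bar>^3)
           \<le> (1 + \<eta>) * Del d e * 2 powr (real d / 2 + 3 * e / 2) * P + C * P^2))"
proof -
  define G where "G = 2 powr (\<epsilon>/2)"
  have G1: "G > 1" unfolding G_def using eps by simp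
  define \<eta> where "\<eta> = c * (2 powr (\<epsilon>/2) - 1) / (1 + 2 powr (\<epsilon>/2))"
  have \<eta>G: "\<eta> = c * (G - 1) / (1 + G)" unfolding \<eta>_def G_def ..
  have a0: "0 \<le> c * (G - 1)" using G1 c by simp
  have \<eta>0: "0 \<le> \<eta>" unfolding \<eta>G using a0 G1 by (intro divide_nonneg_pos) auto
  have \<eta>1: "\<eta> < 1"
  proof -
    have "c * (G - 1) < G - 1" using mult_strict_right_mono[of c 1 "G-1"] G1 c by simp
    hence b: "c * (G - 1) < 1 + G" by linarith
    show "\<eta> < 1" unfolding \<eta>G using b G1 by (subst pos_divide_less_eq) auto
  qed
  define M1 where "M1 e = (1+\<eta>)*(2 powr (e/2)+1)" for e
  define M2 where "M2 e = (1+\<eta>)*(2 powr (e/2))^2 * Nm d e" for e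
  define B0 where "B0 = 2 powr (real d/2)/(1-\<eta>)"
  define Cf where "Cf e = (M1 e)^2 + (3 * M1 e * M2 e + 4 * (M1 e)^3 * B0)" for e
  have M1nn: "M1 e \<ge> 0" for e unfolding M1_def using \<eta>0 by (simp add: add_nonneg_nonneg)
  have M2nn: "M2 e \<ge> 0" for e unfolding M2_def using \<eta>0 Nm_pos[of d e] by simp
  have B0nn: "B0 \<ge> 0" unfolding B0_def using \<eta>1 by simp
  have Cfa: "(M1 e)^2 \<le> Cf e" "3 * M1 e * M2 e + 4 * (M1 e)^3 * B0 \<le> Cf e" for e
    unfolding Cf_def using M1nn[of e] M2nn[of e] B0nn by simp_all
  have Cfnn: "Cf e \<ge> 0" for e using Cfa(1)[of e] zero_le_power2[of "M1 e"] by linarith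
  define C where "C = Cf \<epsilon> + Cf (-\<epsilon>)"
  have CC: "Cf e \<le> C" if "e \<in> {\<epsilon>, -\<epsilon>}" for e
    using that Cfnn[of \<epsilon>] Cfnn[of "-\<epsilon>"] unfolding C_def by auto
  show ?thesis
  proof (rule exI[of _ C], intro allI, unfold Let_def \<eta>_def[symmetric], intro impI, elim conjE)
    fix N :: nat and \<mu> :: "(nat \<Rightarrow> real) measure" and x :: "nat \<Rightarrow> real" and px t :: real
    assume ps: "prob_space \<mu>" and sb: "sets \<mu> = sets borel" and px: "px > 0" and t: "t > 0"
      and hyp: "\<forall>th \<in> {t/3, 2*t/5, t/2, 2*t/3, t, 2*t}.
          (1 - \<eta>) * px * pi powr (real d / 2) * th powr (real d / 2) \<le> integral\<^sup>L \<mu> (\<lambda>y. kern N th x y) \<and>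
          integral\<^sup>L \<mu> (\<lambda>y. kern N th x y) \<le> (1 + \<eta>) * px * pi powr (real d / 2) * th powr (real d / 2)"
    note K = core[OF ps sb px t \<eta>0 \<eta>1 hyp]
    define P where "P = Pt d px t"
    define EY where "EY e = integral\<^sup>L \<mu> (\<lambda>y. Yv N d e t x y)" for e
    have Pnn: "P \<ge> 0" unfolding P_def Pt_def using px t by simp
    have e1: "\<eta>*(1+G) = c*(G-1)" unfolding \<eta>G using G1 by simp
    have e2: "G*(1+\<eta>) - (1-\<eta>) = (G - 1) * (1 + c)" using e1 by (simp add: algebra_simps)
    have g1: "EY \<epsilon> \<le> (2 powr (\<epsilon>/2) - 1) * (1 + c) * P"
    proof -
      have "EY \<epsilon> \<le> P*(G*(1+\<eta>) - (1-\<eta>))" using K(1)[of \<epsilon>] unfolding EY_def P_def G_def .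
      also have "\<dots> = (G - 1) * (1 + c) * P" unfolding e2 by (rule mult.commute)
      finally show ?thesis unfolding G_def .
    qed
    have g2: "integral\<^sup>L \<mu> (\<lambda>y. - Yv N d (-\<epsilon>) t x y) \<le> (1 - 2 powr (-\<epsilon>/2)) * (1 + c) * P"
    proof -
      have gi: "2 powr (-\<epsilon>/2) = 1/G"
      proof -
        have "2 powr (-\<epsilon>/2) * G = 1" unfolding G_def by (simp add: powr_add[symmetric])
        moreover have "G > 0" using G1 by simp
        ultimately show ?thesis by (simp add: eq_divide_eq)
      qed
      have e3: "(1+\<eta>) - (1/G)*(1-\<eta>) = (1 - 1/G) * (1 + c)"
      proof -
        have "(1+\<eta>) - (1/G)*(1-\<eta>) = (G*(1+\<eta>) - (1-\<eta>))/G" using G1 by (simp add: field_simps)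
        also have "\<dots> = (G - 1) * (1 + c) / G" unfolding e2 ..
        also have "\<dots> = (1 - 1/G) * (1 + c)" using G1 by (simp add: field_simps)
        finally show ?thesis .
      qed
      have "integral\<^sup>L \<mu> (\<lambda>y. - Yv N d (-\<epsilon>) t x y) = - integral\<^sup>L \<mu> (\<lambda>y. Yv N d (-\<epsilon>) t x y)"
        by (rule integral_minus)
      also have "\<dots> \<le> P*((1+\<eta>) - 2 powr (-\<epsilon>/2)*(1-\<eta>))"
        using K(2)[of "-\<epsilon>"] unfolding P_def .
      also have "\<dots> = (1 - 2 powr (-\<epsilon>/2)) * (1 + c) * P" unfolding gi e3 by (rule mult.commute)
      finally show ?thesis .
    qed
    have g3: "integral\<^sup>L \<mu> (\<lambda>y. (Yv N d e t x y - EY e)^2)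
           \<ge> 2 powr e * Gam d e * (1 - \<eta> * Nm d e / Gam d e) * P - C * P^2 \<and>
         integral\<^sup>L \<mu> (\<lambda>y. \<bar>Yv N d e t x y - EY e\<bar>^3)
           \<le> (1 + \<eta>) * Del d e * 2 powr (real d / 2 + 3 * e / 2) * P + C * P^2"
      if e: "e \<in> {\<epsilon>, -\<epsilon>}" for e
    proof
      have CP: "Cf e * P^2 \<le> C * P^2" using CC[OF e] by (simp add: mult_right_mono)
      have v: "integral\<^sup>L \<mu> (\<lambda>y. (Yv N d e t x y - EY e)^2) \<ge> 2 powr e * (Gam d e - \<eta> * Nm d e) * P - (M1 e)^2 * P^2"
        using K(3)[of e] unfolding EY_def P_def M1_def .
      have "(M1 e)^2 * P^2 \<le> Cf e * P^2" using Cfa(1)[of e] by (simp add: mult_right_mono)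
      show "integral\<^sup>L \<mu> (\<lambda>y. (Yv N d e t x y - EY e)^2)
           \<ge> 2 powr e * Gam d e * (1 - \<eta> * Nm d e / Gam d e) * P - C * P^2"
      proof (cases "Gam d e = 0")
        case True
        have "0 \<le> integral\<^sup>L \<mu> (\<lambda>y. (Yv N d e t x y - EY e)^2)" by simp
        moreover have "0 \<le> C * P^2" using CC[OF e] Cfnn[of e] by simp
        moreover have "2 powr e * Gam d e * (1 - \<eta> * Nm d e / Gam d e) * P = 0" using True by simp
        ultimately show ?thesis by linarith
      next
        case False
        hence "2 powr e * Gam d e * (1 - \<eta> * Nm d e / Gam d e) = 2 powr e * (Gam d e - \<eta> * Nm d e)"
          by (simp add: field_simps)
        hence "2 powr e * Gam d e * (1 - \<eta> * Nm d e / Gam d e) * P = 2 powr e * (Gam d e - \<eta> * Nm d e) * P"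
          by simp
        thus ?thesis using v CP \<open>(M1 e)^2 * P^2 \<le> Cf e * P^2\<close> by linarith
      qed
      have w: "integral\<^sup>L \<mu> (\<lambda>y. \<bar>Yv N d e t x y - EY e\<bar>^3) \<le> (1 + \<eta>) * Del d e * 2 powr (real d / 2 + 3 * e / 2) * P
          + (3 * M1 e * M2 e + 4 * (M1 e)^3 * B0) * P^2"
        using K(4)[of e] unfolding EY_def P_def M1_def M2_def B0_def .
      have "(3 * M1 e * M2 e + 4 * (M1 e)^3 * B0) * P^2 \<le> Cf e * P^2" using Cfa(2)[of e] by (simp add: mult_right_mono)
      thus "integral\<^sup>L \<mu> (\<lambda>y. \<bar>Yv N d e t x y - EY e\<bar>^3)
           \<le> (1 + \<eta>) * Del d e * 2 powr (real d / 2 + 3 * e / 2) * P + C * P^2"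
        using w CP by linarith
    qed
    show "integral\<^sup>L \<mu> (\<lambda>y. Yv N d \<epsilon> t x y) \<le> (2 powr (\<epsilon> / 2) - 1) * (1 + c) * Pt d px t \<and>
       integral\<^sup>L \<mu> (\<lambda>y. - Yv N d (- \<epsilon>) t x y) \<le> (1 - 2 powr (- \<epsilon> / 2)) * (1 + c) * Pt d px t \<and>
       (\<forall>e\<in>{\<epsilon>, - \<epsilon>}.
           2 powr e * Gam d e * (1 - \<eta> * Nm d e / Gam d e) * Pt d px t - C * (Pt d px t)\<^sup>2
           \<le> integral\<^sup>L \<mu> (\<lambda>y. (Yv N d e t x y - integral\<^sup>L \<mu> (\<lambda>y. Yv N d e t x y))\<^sup>2) \<and>
           integral\<^sup>L \<mu> (\<lambda>y. \<bar>Yv N d e t x y - integral\<^sup>L \<mu> (\<lambda>y. Yv N d e t x y)\<bar> ^ 3)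
           \<le> (1 + \<eta>) * Del d e * 2 powr (real d / 2 + 3 * e / 2) * Pt d px t + C * (Pt d px t)\<^sup>2)"
      apply (intro conjI ballI)
      subgoal using g1 unfolding EY_def P_def .
      subgoal using g2 unfolding P_def .
      subgoal premises pr for e using conjunct1[OF g3[OF pr]] unfolding EY_def P_def .
      subgoal premises pr for e using conjunct2[OF g3[OF pr]] unfolding EY_def P_def .
      done
  qed
qed
end
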